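(* Let $p\ge2$ be an integer and let $G$ be a graph with $\mathrm{girth}(G)\ge 2p-1$. Then $G$ is $p$-path degenerate if and only if $G$ does not contain a subgraph $H$ that is a $\le(p-2)$-subdivision of a simple graph with minimum degree at least $3$.
   Context: Graphs are finite and simple; the girth is the length of a shortest cycle ($+\infty$ for forests). A $\le k$-subdivision of a graph $F$ is a graph obtained from $F$ by replacing each edge by a path of length at most $k+1$ (i.e. subdividing each edge at most $k$ times), these paths being internally disjoint. A strict ear of a graph $G$ is a path of $G$ whose internal vertices all have degree $2$ in $G$ and whose two endpoints are distinct. For an integer $p\ge1$, a $p$-reduction of $G$ is the deletion of either an isolated vertex, or a vertex of degree $1$, or the internal vertices of a strict ear of $G$ of length at least $p$. A graph is $p$-path degenerate if it can be reduced to the empty graph by a sequence of $p$-reductions. *)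

theory Defs
  imports Main "HOL-Library.Extended_Nat"
begin

definition graph :: "'a set \<Rightarrow> 'a set set \<Rightarrow> bool" where
  "graph V E \<longleftrightarrow> finite V \<and> (\<forall>e\<in>E. \<exists>u v. u \<noteq> v \<and> u \<in> V \<and> v \<in> V \<and> e = {u, v})"

definition degree :: "'a set set \<Rightarrow> 'a \<Rightarrow> nat" where
  "degree E v = card {e \<in> E. v \<in> e}"

definition subgraph :: "'a set \<Rightarrow> 'a set set \<Rightarrow> 'a set \<Rightarrow> 'a set set \<Rightarrow> bool" where
  "subgraph VH EH V E \<longleftrightarrow> graph VH EH \<and> VH \<subseteq> V \<and> EH \<subseteq> E"

text \<open>A path given by its (distinct) vertex sequence; its length is the number of edges.\<close>
definition is_path :: "'a set \<Rightarrow> 'a set set \<Rightarrow> 'a list \<Rightarrow> bool" where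
  "is_path V E xs \<longleftrightarrow> xs \<noteq> [] \<and> distinct xs \<and> set xs \<subseteq> V \<and>
     (\<forall>i. Suc i < length xs \<longrightarrow> {xs ! i, xs ! Suc i} \<in> E)"

definition path_edges :: "'a list \<Rightarrow> 'a set set" where
  "path_edges xs = {{xs ! i, xs ! Suc i} | i. Suc i < length xs}"

definition internal :: "'a list \<Rightarrow> 'a set" where
  "internal xs = set (butlast (tl xs))"

definition is_cycle :: "'a set \<Rightarrow> 'a set set \<Rightarrow> 'a list \<Rightarrow> bool" where
  "is_cycle V E xs \<longleftrightarrow> length xs \<ge> 3 \<and> is_path V E xs \<and> {last xs, hd xs} \<in> E"

text \<open>Girth: length of a shortest cycle, infinity for forests (Inf of the empty set of enat).\<close>
definition girth :: "'a set \<Rightarrow> 'a set set \<Rightarrow> enat" where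
  "girth V E = (INF xs \<in> {xs. is_cycle V E xs}. enat (length xs))"

text \<open>H = (VH,EH) is a \<le>k-subdivision of F = (VF,EF), where the branch vertices are VF \<subseteq> VH
  (this is up to isomorphism w.l.o.g.): each edge e of F is replaced by a path P e of length
  between 1 and k+1 joining the two ends of e, the paths being internally disjoint and
  avoiding VF internally, and H is exactly the union of these paths together with VF.\<close>
definition is_le_subdivision :: "nat \<Rightarrow> 'a set \<Rightarrow> 'a set set \<Rightarrow> 'a set \<Rightarrow> 'a set set \<Rightarrow> bool" where
  "is_le_subdivision k VF EF VH EH \<longleftrightarrow> graph VF EF \<and> graph VH EH \<and>
     (\<exists>P. (\<forall>e\<in>EF. is_path VH EH (P e) \<and> 2 \<le> length (P e) \<and> length (P e) \<le> k + 2 \<and>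
                     {hd (P e), last (P e)} = e \<and> internal (P e) \<inter> VF = {}) \<and>
          (\<forall>e\<in>EF. \<forall>e'\<in>EF. e \<noteq> e' \<longrightarrow> internal (P e) \<inter> internal (P e') = {}) \<and>
          VH = VF \<union> (\<Union>e\<in>EF. internal (P e)) \<and>
          EH = (\<Union>e\<in>EF. path_edges (P e)))"

definition strict_ear :: "'a set \<Rightarrow> 'a set set \<Rightarrow> 'a list \<Rightarrow> bool" where
  "strict_ear V E xs \<longleftrightarrow> is_path V E xs \<and> length xs \<ge> 2 \<and> hd xs \<noteq> last xs \<and>
     (\<forall>v\<in>internal xs. degree E v = 2)"

definition delete_vertices :: "'a set \<Rightarrow> 'a set \<times> 'a set set \<Rightarrow> 'a set \<times> 'a set set" where
  "delete_vertices S G = (fst G - S, {e \<in> snd G. e \<inter> S = {}})"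

definition p_reduction :: "nat \<Rightarrow> 'a set \<times> 'a set set \<Rightarrow> 'a set \<times> 'a set set \<Rightarrow> bool" where
  "p_reduction p G G' \<longleftrightarrow>
     (\<exists>v\<in>fst G. degree (snd G) v \<le> 1 \<and> G' = delete_vertices {v} G) \<or>
     (\<exists>xs. strict_ear (fst G) (snd G) xs \<and> length xs - 1 \<ge> p \<and> G' = delete_vertices (internal xs) G)"

definition p_path_degenerate :: "nat \<Rightarrow> 'a set \<Rightarrow> 'a set set \<Rightarrow> bool" where
  "p_path_degenerate p V E \<longleftrightarrow> (p_reduction p)\<^sup>*\<^sup>* (V, E) ({}, {})"

end

theory Submission
  imports Defs
begin

definition adj :: "'a set set \<Rightarrow> 'a \<Rightarrow> 'a \<Rightarrow> bool" where
  "adj E x y \<longleftrightarrow> {x, y} \<in> E"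

lemma adj_sym: "adj E x y = adj E y x"
  by (simp add: adj_def insert_commute)

lemma is_path_succ: "is_path V E xs \<longleftrightarrow> xs \<noteq> [] \<and> distinct xs \<and> set xs \<subseteq> V \<and> successively (adj E) xs"
  by (simp add: is_path_def successively_conv_nth adj_def)

definition N :: "'a set set \<Rightarrow> 'a \<Rightarrow> 'a set" where
  "N E v = {w. {v, w} \<in> E}"

lemma graph_finite_E: "graph V E \<Longrightarrow> finite E"
proof -
  assume g: "graph V E"
  have "E \<subseteq> Pow V"
  proof
    fix e assume "e \<in> E"
    then obtain u v where "u \<in> V" "v \<in> V" "e = {u, v}" using g unfolding graph_def by meson
    thus "e \<in> Pow V" by auto
  qed
  moreover have "finite V" using g unfolding graph_def by meson
  ultimately show ?thesis by (meson finite_Pow_iff finite_subset)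
qed

lemma graph_edge: "graph V E \<Longrightarrow> {a, b} \<in> E \<Longrightarrow> a \<noteq> b \<and> a \<in> V \<and> b \<in> V"
proof -
  assume g: "graph V E" and e: "{a, b} \<in> E"
  then obtain u v where "u \<noteq> v" "u \<in> V" "v \<in> V" "{a, b} = {u, v}" unfolding graph_def by meson
  thus ?thesis by (auto simp: doubleton_eq_iff)
qed

lemma N_sub: "graph V E \<Longrightarrow> N E v \<subseteq> V"
proof
  fix w assume "graph V E" "w \<in> N E v"
  thus "w \<in> V" unfolding N_def using graph_edge[of V E v w] by simp
qed

lemma N_finite: "graph V E \<Longrightarrow> finite (N E v)"
proof -
  assume g: "graph V E"
  hence "finite V" unfolding graph_def by simp
  thus ?thesis using N_sub[OF g] by (rule finite_subset[rotated])
qed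

lemma degree_N: "graph V E \<Longrightarrow> degree E v = card (N E v)"
proof -
  assume g: "graph V E"
  have "bij_betw (\<lambda>w. {v, w}) (N E v) {e \<in> E. v \<in> e}"
    unfolding bij_betw_def
  proof
    show "inj_on (\<lambda>w. {v, w}) (N E v)" by (auto simp: inj_on_def doubleton_eq_iff)
    show "(\<lambda>w. {v, w}) ` N E v = {e \<in> E. v \<in> e}"
    proof
      show "(\<lambda>w. {v, w}) ` N E v \<subseteq> {e \<in> E. v \<in> e}" by (auto simp: N_def)
      show "{e \<in> E. v \<in> e} \<subseteq> (\<lambda>w. {v, w}) ` N E v"
      proof
        fix e assume e: "e \<in> {e \<in> E. v \<in> e}"
        then obtain a b where ab: "e = {a, b}" using g unfolding graph_def by auto
        show "e \<in> (\<lambda>w. {v, w}) ` N E v"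
        proof (cases "v = a")
          case True thus ?thesis using e ab by (auto simp: N_def image_def)
        next
          case False
          hence "v = b" using e ab by auto
          thus ?thesis using e ab by (auto simp: N_def image_def insert_commute)
        qed
      qed
    qed
  qed
  thus ?thesis unfolding degree_def by (metis bij_betw_same_card)
qed

lemma N_mem: "w \<in> N E v \<longleftrightarrow> {v, w} \<in> E"
  by (simp add: N_def)

lemma two_nb:
  assumes "finite S" "card S = 2" "a \<in> S" "b \<in> S" "c \<in> S" "a \<noteq> b" "a \<noteq> c"
  shows "b = c"
proof (rule ccontr)
  assume "b \<noteq> c"
  hence "card {a, b, c} = 3" using assms by auto
  moreover have "card {a, b, c} \<le> card S" using assms by (intro card_mono) auto
  ultimately show False using assms by simp
qed

lemma internal_nth: "x \<in> internal s \<longleftrightarrow> (\<exists>m. 0 < m \<and> m < length s - 1 \<and> x = s ! m)"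
proof -
  have l: "length (butlast (tl s)) = length s - 2" by simp
  have n: "m < length s - 2 \<Longrightarrow> butlast (tl s) ! m = s ! Suc m" for m
    by (simp add: nth_butlast nth_tl)
  show ?thesis unfolding internal_def set_conv_nth
  proof
    assume "x \<in> {butlast (tl s) ! i |i. i < length (butlast (tl s))}"
    then obtain i where "i < length s - 2" "x = s ! Suc i" using l n by auto
    thus "\<exists>m>0. m < length s - 1 \<and> x = s ! m" by (intro exI[of _ "Suc i"]) auto
  next
    assume "\<exists>m>0. m < length s - 1 \<and> x = s ! m"
    then obtain m where "0 < m" "m < length s - 1" "x = s ! m" by auto
    thus "x \<in> {butlast (tl s) ! i |i. i < length (butlast (tl s))}"
      using n[of "m - 1"] l by (intro CollectI exI[of _ "m - 1"]) auto
  qed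
qed

lemma internal_rev: "internal (rev s) = internal s"
proof (cases "length s \<ge> 2")
  case True
  then obtain a ys where xs: "s = a # ys" "ys \<noteq> []" by (cases s; cases "tl s") auto
  then obtain zs b where "ys = zs @ [b]" by (metis append_butlast_last_id)
  hence "s = a # zs @ [b]" using xs by simp
  thus ?thesis unfolding internal_def by simp
next
  case False
  hence "length s = 0 \<or> length s = 1" by linarith
  thus ?thesis unfolding internal_def by (auto simp: length_Suc_conv)
qed

lemma set_decomp: "length xs \<ge> 2 \<Longrightarrow> set xs = {hd xs, last xs} \<union> internal xs"
proof -
  assume "length xs \<ge> 2"
  then obtain a ys where xs: "xs = a # ys" "ys \<noteq> []" by (cases xs; cases "tl xs") auto
  then obtain zs b where "ys = zs @ [b]" by (metis append_butlast_last_id)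
  hence "xs = a # zs @ [b]" using xs by simp
  thus ?thesis unfolding internal_def by auto
qed

lemma is_path_rev: "is_path V E s \<Longrightarrow> is_path V E (rev s)"
  unfolding is_path_succ by (auto simp: adj_sym)

lemma path_mono: "is_path V E s \<Longrightarrow> V \<subseteq> V' \<Longrightarrow> E \<subseteq> E' \<Longrightarrow> is_path V' E' s"
  unfolding is_path_def by (meson order_trans subsetD)

lemma path_edge: "is_path V E s \<Longrightarrow> Suc i < length s \<Longrightarrow> {s ! i, s ! Suc i} \<in> E"
  unfolding is_path_def by blast

lemma girth_cycle: "girth V E \<ge> enat n \<Longrightarrow> is_cycle V E xs \<Longrightarrow> n \<le> length xs"
proof -
  assume a: "girth V E \<ge> enat n" and c: "is_cycle V E xs"
  have "girth V E \<le> enat (length xs)" unfolding girth_def using c by (intro INF_lower) auto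
  thus ?thesis using a by (metis enat_ord_simps(1) order_trans)
qed


lemma distinct_nth_neq: "distinct xs \<Longrightarrow> a < length xs \<Longrightarrow> b < length xs \<Longrightarrow> a \<noteq> b \<Longrightarrow> xs ! a \<noteq> xs ! b"
  by (simp add: nth_eq_iff_index_eq)

lemma edge_N: "{a, w} \<in> E \<Longrightarrow> a \<in> N E w"
  by (simp add: N_mem insert_commute)

lemma edge_N': "{w, a} \<in> E \<Longrightarrow> a \<in> N E w"
  by (simp add: N_mem)

lemma fwd:
  assumes g: "graph V E" and s: "is_path V E s" and s': "is_path V E s'"
    and deg: "\<forall>m. 0 < m \<and> m < length s - 1 \<longrightarrow> degree E (s!m) = 2"
    and e0: "s!i = s'!j" and e1: "s!Suc i = s'!Suc j"
  shows "\<forall>k. i+k < length s \<and> j+k < length s' \<longrightarrow> s!(i+k) = s'!(j+k)"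
proof -
  have ds: "distinct s" and ds': "distinct s'" using s s' unfolding is_path_def by auto
  have "(i+k < length s \<and> j+k < length s' \<longrightarrow> s!(i+k) = s'!(j+k)) \<and>
        (i+Suc k < length s \<and> j+Suc k < length s' \<longrightarrow> s!(i+Suc k) = s'!(j+Suc k))" for k
  proof (induction k)
    case 0 show ?case using e0 e1 by simp
  next
    case (Suc k)
    show ?case
    proof (intro conjI impI)
      assume "i + Suc k < length s \<and> j + Suc k < length s'"
      thus "s ! (i + Suc k) = s' ! (j + Suc k)" using Suc by blast
    next
      assume a: "i + Suc (Suc k) < length s \<and> j + Suc (Suc k) < length s'"
      have q0: "s!(i+k) = s'!(j+k)" and q1: "s!(i+Suc k) = s'!(j+Suc k)" using Suc a by auto
      define w where "w = s!(i+Suc k)"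
      have dw: "degree E w = 2" using deg a unfolding w_def by auto
      have fin: "finite (N E w)" using N_finite[OF g] .
      have card: "card (N E w) = 2" using dw degree_N[OF g] by simp
      have ain: "s!(i+k) \<in> N E w" unfolding w_def
        using path_edge[OF s, of "i+k"] a by (intro edge_N) simp
      have bin: "s!(i+Suc(Suc k)) \<in> N E w" unfolding w_def
        using path_edge[OF s, of "i+Suc k"] a by (intro edge_N') simp
      have cin: "s'!(j+Suc(Suc k)) \<in> N E w" unfolding w_def q1
        using path_edge[OF s', of "j+Suc k"] a by (intro edge_N') simp
      have ab: "s!(i+k) \<noteq> s!(i+Suc(Suc k))" using ds a by (intro distinct_nth_neq) auto
      have ac: "s!(i+k) \<noteq> s'!(j+Suc (Suc k))" unfolding q0 using ds' a by (intro distinct_nth_neq) auto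
      show "s ! (i + Suc (Suc k)) = s' ! (j + Suc (Suc k))"
        using two_nb[OF fin card ain bin cin ab ac] .
    qed
  qed
  thus ?thesis by blast
qed

lemma fwd_len:
  assumes g: "graph V E" and s: "is_path V E s" and s': "is_path V E s'"
    and deg: "\<forall>m. 0 < m \<and> m < length s - 1 \<longrightarrow> degree E (s!m) = 2"
    and j: "Suc j < length s'"
    and e0: "s!i = s'!j" and e1: "s!Suc i = s'!Suc j"
    and nl: "last s' \<notin> internal s"
  shows "length s - i \<le> length s' - j"
proof (rule ccontr)
  assume c: "\<not> length s - i \<le> length s' - j"
  define k where "k = length s' - 1 - j"
  have k1: "1 \<le> k" using j unfolding k_def by simp
  have ik: "i + k < length s - 1" using c j unfolding k_def by simp
  have jk: "j + k = length s' - 1" using j unfolding k_def by simp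
  have lt: "i+k < length s \<and> j+k < length s'" using ik jk j by linarith
  have "s!(i+k) = s'!(j+k)" using fwd[OF g s s' deg e0 e1] lt by blast
  also have "\<dots> = last s'" using jk j by (subst last_conv_nth) auto
  finally have "last s' \<in> internal s" unfolding internal_nth using ik k1
    by (intro exI[of _ "i+k"]) auto
  thus False using nl by simp
qed

lemma core:
  assumes g: "graph V E" and s: "is_path V E s" and s': "is_path V E s'"
    and deg: "\<forall>m. 0 < m \<and> m < length s - 1 \<longrightarrow> degree E (s!m) = 2"
    and nh: "hd s' \<notin> internal s" and nl: "last s' \<notin> internal s"
    and i: "0 < i" "i < length s - 1" and j: "0 < j" "j < length s' - 1"
    and e0: "s!i = s'!j" and e1: "s!Suc i = s'!Suc j"
  shows "i \<le> j \<and> length s - i \<le> length s' - j \<and> (\<forall>k. i+k < length s \<longrightarrow> s!(i+k) = s'!(j+k))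
     \<and> (\<forall>k\<le>i. s!(i-k) = s'!(j-k))"
proof -
  have ds: "distinct s" and ds': "distinct s'" using s s' unfolding is_path_def by auto
  have L1: "length s - i \<le> length s' - j" using fwd_len[OF g s s' deg _ e0 e1 nl] j by simp
  have F: "\<forall>k. i+k < length s \<longrightarrow> s!(i+k) = s'!(j+k)" using fwd[OF g s s' deg e0 e1] L1 by auto
  have bk: "s!(i-1) = s'!(j-1)"
  proof -
    define w where "w = s!i"
    have dw: "degree E w = 2" using deg i unfolding w_def by auto
    have fin: "finite (N E w)" using N_finite[OF g] .
    have card: "card (N E w) = 2" using dw degree_N[OF g] by simp
    have ain: "s!Suc i \<in> N E w" unfolding w_def
      using path_edge[OF s, of "i"] i by (intro edge_N') simp
    have bin: "s!(i-1) \<in> N E w" unfolding w_def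
      using path_edge[OF s, of "i-1"] i by (intro edge_N) simp
    have cin: "s'!(j-1) \<in> N E w" unfolding w_def e0
      using path_edge[OF s', of "j-1"] j by (intro edge_N) simp
    have ab: "s!Suc i \<noteq> s!(i-1)" using ds i by (intro distinct_nth_neq) auto
    have ac: "s!Suc i \<noteq> s'!(j-1)" unfolding e1 using ds' j by (intro distinct_nth_neq) auto
    show ?thesis using two_nb[OF fin card ain bin cin ab ac] .
  qed
  define i' where "i' = length s - 1 - i"
  define j' where "j' = length s' - 1 - j"
  have rs: "is_path V E (rev s)" and rs': "is_path V E (rev s')" using s s' by (auto intro: is_path_rev)
  have nth_r: "n < length xs \<Longrightarrow> rev xs ! n = xs ! (length xs - Suc n)" for n and xs :: "'a list"
    by (rule rev_nth)
  have r0: "rev s ! i' = rev s' ! j'" using i j e0 unfolding i'_def j'_def by (simp add: rev_nth)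
  have r1: "rev s ! Suc i' = rev s' ! Suc j'" using i j bk unfolding i'_def j'_def
    by (simp add: rev_nth Suc_diff_Suc)
  have rdeg: "\<forall>m. 0 < m \<and> m < length (rev s) - 1 \<longrightarrow> degree E (rev s ! m) = 2"
  proof (intro allI impI)
    fix m assume m: "0 < m \<and> m < length (rev s) - 1"
    hence "rev s ! m = s ! (length s - Suc m)" by (intro rev_nth) (simp, linarith)
    moreover have "0 < length s - Suc m \<and> length s - Suc m < length s - 1" using m by auto
    ultimately show "degree E (rev s ! m) = 2" using deg by metis
  qed
  have rnl: "last (rev s') \<notin> internal (rev s)"
  proof -
    have "s' \<noteq> []" using s' unfolding is_path_def by simp
    thus ?thesis using nh by (simp add: internal_rev last_rev)
  qed
  have L2: "length (rev s) - i' \<le> length (rev s') - j'"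
    using fwd_len[OF g rs rs' rdeg _ r0 r1 rnl] j unfolding j'_def by simp
  hence ij: "i \<le> j" using i j unfolding i'_def j'_def by simp
  have B: "\<forall>k\<le>i. s!(i-k) = s'!(j-k)"
  proof (intro allI impI)
    fix k assume k: "k \<le> i"
    have lt: "i'+k < length (rev s) \<and> j'+k < length (rev s')"
      using k ij i j unfolding i'_def j'_def by (simp, linarith)
    have "rev s ! (i'+k) = rev s' ! (j'+k)"
      using fwd[OF g rs rs' rdeg r0 r1] lt by blast
    moreover have "rev s ! (i'+k) = s!(length s - Suc (i'+k))" using lt by (intro rev_nth) simp
    moreover have "length s - Suc (i'+k) = i - k" using k i unfolding i'_def by simp
    moreover have "rev s' ! (j'+k) = s'!(length s' - Suc (j'+k))" using lt by (intro rev_nth) simp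
    moreover have "length s' - Suc (j'+k) = j - k" using k ij j unfolding j'_def by simp
    ultimately show "s!(i-k) = s'!(j-k)" by simp
  qed
  show ?thesis using ij L1 F B by blast
qed


definition seg :: "'a set \<Rightarrow> 'a set set \<Rightarrow> 'a list \<Rightarrow> bool" where
  "seg V E s \<longleftrightarrow> is_path V E s \<and> 2 \<le> length s \<and> 3 \<le> degree E (hd s) \<and> 3 \<le> degree E (last s)
     \<and> (\<forall>w\<in>internal s. degree E w = 2)"

lemma seg_rev: "seg V E s \<Longrightarrow> seg V E (rev s)"
proof -
  assume a: "seg V E s"
  hence "s \<noteq> []" unfolding seg_def by auto
  thus ?thesis using a unfolding seg_def by (auto simp: is_path_rev internal_rev hd_rev last_rev)
qed

lemma seg_deg: "seg V E s \<Longrightarrow> \<forall>m. 0 < m \<and> m < length s - 1 \<longrightarrow> degree E (s!m) = 2"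
  unfolding seg_def by (metis internal_nth)

lemma seg_ends: "seg V E s \<Longrightarrow> seg V E s' \<Longrightarrow> hd s' \<notin> internal s \<and> last s' \<notin> internal s"
  unfolding seg_def by force

lemma seg_case1:
  assumes g: "graph V E" and s: "seg V E s" and s': "seg V E s'"
    and i: "0 < i" "i < length s - 1" and j: "0 < j" "j < length s' - 1"
    and e0: "s!i = s'!j" and e1: "s!Suc i = s'!Suc j"
  shows "s = s'"
proof -
  have ps: "is_path V E s" and ps': "is_path V E s'" using s s' unfolding seg_def by auto
  have n1: "hd s' \<notin> internal s \<and> last s' \<notin> internal s" using seg_ends[OF s s'] .
  have n2: "hd s \<notin> internal s' \<and> last s \<notin> internal s'" using seg_ends[OF s' s] .
  have c1: "i \<le> j \<and> length s - i \<le> length s' - j \<and> (\<forall>k. i+k < length s \<longrightarrow> s!(i+k) = s'!(j+k))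
     \<and> (\<forall>k\<le>i. s!(i-k) = s'!(j-k))"
    using core[OF g ps ps' seg_deg[OF s] _ _ i j e0 e1] n1 by blast
  have c2: "j \<le> i \<and> length s' - j \<le> length s - i"
    using core[OF g ps' ps seg_deg[OF s'] _ _ j i e0[symmetric] e1[symmetric]] n2 by blast
  have ij: "i = j" using c1 c2 by simp
  have len: "length s = length s'" using c1 c2 i j by linarith
  show ?thesis
  proof (rule nth_equalityI[OF len])
    fix m assume m: "m < length s"
    show "s ! m = s' ! m"
    proof (cases "i \<le> m")
      case True
      thus ?thesis using c1 m ij by (metis le_add_diff_inverse)
    next
      case False
      have "i - m \<le> i" by simp
      hence "s!(i - (i - m)) = s'!(j - (i - m))" using c1 by blast
      moreover have "i - (i - m) = m" "j - (i - m) = m" using False ij by auto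
      ultimately show ?thesis by simp
    qed
  qed
qed

lemma seg_shared:
  assumes g: "graph V E" and s: "seg V E s" and s': "seg V E s'"
    and w: "w \<in> internal s" "w \<in> internal s'"
  shows "s = s' \<or> s = rev s'"
proof -
  have ps: "is_path V E s" and ps': "is_path V E s'" using s s' unfolding seg_def by auto
  have ds: "distinct s" and ds': "distinct s'" using ps ps' unfolding is_path_def by auto
  obtain i where i: "0 < i" "i < length s - 1" "w = s!i" using w internal_nth by metis
  obtain j where j: "0 < j" "j < length s' - 1" "w = s'!j" using w internal_nth by metis
  have dw: "degree E w = 2" using s w unfolding seg_def by blast
  have fin: "finite (N E w)" using N_finite[OF g] .
  have card: "card (N E w) = 2" using dw degree_N[OF g] by simp
  have ain: "s'!Suc j \<in> N E w" unfolding j(3)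
    using path_edge[OF ps', of "j"] j by (intro edge_N') simp
  have bin: "s!Suc i \<in> N E w" unfolding i(3)
    using path_edge[OF ps, of "i"] i by (intro edge_N') simp
  have cin: "s'!(j-1) \<in> N E w" unfolding j(3)
    using path_edge[OF ps', of "j-1"] j by (intro edge_N) simp
  have ac: "s'!Suc j \<noteq> s'!(j-1)" using ds' j by (intro distinct_nth_neq) auto
  show ?thesis
  proof (cases "s!Suc i = s'!Suc j")
    case True
    thus ?thesis using seg_case1[OF g s s' i(1,2) j(1,2)] i j by simp
  next
    case False
    hence e1: "s!Suc i = s'!(j-1)" using two_nb[OF fin card ain bin cin _ ac] by metis
    define j' where "j' = length s' - 1 - j"
    have r: "seg V E (rev s')" using seg_rev[OF s'] .
    have j': "0 < j'" "j' < length (rev s') - 1" using j unfolding j'_def by auto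
    have r0: "s!i = rev s' ! j'" using i j unfolding j'_def by (simp add: rev_nth)
    have r1: "s!Suc i = rev s' ! Suc j'" using e1 j unfolding j'_def
      by (simp add: rev_nth Suc_diff_Suc)
    show ?thesis using seg_case1[OF g s r i(1,2) j' r0 r1] by simp
  qed
qed


lemma follow_len:
  assumes g: "graph V E" and ps: "is_path V E s" and ps': "is_path V E s'"
    and deg: "\<forall>m. 0 < m \<and> m < length s - 1 \<longrightarrow> degree E (s!m) = 2"
    and nh: "hd s' \<notin> internal s" and nl: "last s' \<notin> internal s"
    and w: "w \<in> internal s" "w \<in> internal s'"
  shows "length s \<le> length s'"
proof -
  have ds: "distinct s" and ds': "distinct s'" using ps ps' unfolding is_path_def by auto
  obtain i where i: "0 < i" "i < length s - 1" "w = s!i" using w internal_nth by metis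
  obtain j where j: "0 < j" "j < length s' - 1" "w = s'!j" using w internal_nth by metis
  have dw: "degree E w = 2" using deg i by simp
  have fin: "finite (N E w)" using N_finite[OF g] .
  have card: "card (N E w) = 2" using dw degree_N[OF g] by simp
  have ain: "s'!Suc j \<in> N E w" unfolding j(3)
    using path_edge[OF ps', of "j"] j by (intro edge_N') simp
  have bin: "s!Suc i \<in> N E w" unfolding i(3)
    using path_edge[OF ps, of "i"] i by (intro edge_N') simp
  have cin: "s'!(j-1) \<in> N E w" unfolding j(3)
    using path_edge[OF ps', of "j-1"] j by (intro edge_N) simp
  have ac: "s'!Suc j \<noteq> s'!(j-1)" using ds' j by (intro distinct_nth_neq) auto
  show ?thesis
  proof (cases "s!Suc i = s'!Suc j")
    case True
    have "i \<le> j \<and> length s - i \<le> length s' - j"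
      using core[OF g ps ps' deg nh nl i(1,2) j(1,2)] True i j by simp
    thus ?thesis using i j by linarith
  next
    case False
    hence e1: "s!Suc i = s'!(j-1)" using two_nb[OF fin card ain bin cin _ ac] by metis
    define j' where "j' = length s' - 1 - j"
    have r: "is_path V E (rev s')" using is_path_rev[OF ps'] .
    have ne: "s' \<noteq> []" using ps' unfolding is_path_def by simp
    have j': "0 < j'" "j' < length (rev s') - 1" using j unfolding j'_def by auto
    have r0: "s!i = rev s' ! j'" using i j unfolding j'_def by (simp add: rev_nth)
    have r1: "s!Suc i = rev s' ! Suc j'" using e1 j unfolding j'_def
      by (simp add: rev_nth Suc_diff_Suc)
    have nh': "hd (rev s') \<notin> internal s" using nl ne by (simp add: hd_rev)
    have nl': "last (rev s') \<notin> internal s" using nh ne by (simp add: last_rev)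
    have "i \<le> j' \<and> length s - i \<le> length (rev s') - j'"
      using core[OF g ps r deg nh' nl' i(1,2) j' r0 r1] by simp
    thus ?thesis using i j' by (simp only: length_rev) linarith
  qed
qed

definition hasH :: "nat \<Rightarrow> 'a set \<Rightarrow> 'a set set \<Rightarrow> bool" where
  "hasH p V E \<longleftrightarrow> (\<exists>VH EH VF EF. subgraph VH EH V E \<and> graph VF EF \<and> VF \<noteq> {} \<and>
          (\<forall>v\<in>VF. degree EF v \<ge> 3) \<and> is_le_subdivision (p - 2) VF EF VH EH)"

lemma edge_sub: "graph VF EF \<Longrightarrow> e \<in> EF \<Longrightarrow> e \<subseteq> VF"
  unfolding graph_def by auto

lemma Hdeg:
  assumes g: "graph V E" and sub: "subgraph VH EH V E" and gF: "graph VF EF"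
    and dF: "\<forall>v\<in>VF. degree EF v \<ge> 3"
    and Pp: "\<forall>e\<in>EF. is_path VH EH (P e) \<and> 2 \<le> length (P e) \<and> length (P e) \<le> k + 2 \<and>
                     {hd (P e), last (P e)} = e \<and> internal (P e) \<inter> VF = {}"
    and Pd: "\<forall>e\<in>EF. \<forall>e'\<in>EF. e \<noteq> e' \<longrightarrow> internal (P e) \<inter> internal (P e') = {}"
    and VH: "VH = VF \<union> (\<Union>e\<in>EF. internal (P e))"
  shows "(\<forall>v\<in>VF. degree E v \<ge> 3) \<and> (\<forall>u\<in>VH. degree E u \<ge> 2)"
proof -
  have VHV: "VH \<subseteq> V" and EHE: "EH \<subseteq> E" using sub unfolding subgraph_def by auto
  have pathE: "is_path V E (P e)" if "e \<in> EF" for e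
  proof -
    have "is_path VH EH (P e)" using bspec[OF Pp that] by simp
    thus ?thesis using path_mono VHV EHE by metis
  qed
  have D1: "degree E v \<ge> 3" if v: "v \<in> VF" for v
  proof -
    define A where "A = {e \<in> EF. v \<in> e}"
    define Q where "Q e = (if hd (P e) = v then P e else rev (P e))" for e
    have Qfacts: "is_path V E (Q e) \<and> 2 \<le> length (Q e) \<and> hd (Q e) = v \<and> e = {v, last (Q e)}
       \<and> internal (Q e) = internal (P e)" if e: "e \<in> A" for e
    proof -
      have pe: "is_path V E (P e)" "2 \<le> length (P e)" "{hd (P e), last (P e)} = e"
        using bspec[OF Pp, of e] pathE[of e] e unfolding A_def by auto
      have ne: "P e \<noteq> []" using pe by auto
      have ve: "v \<in> e" using e unfolding A_def by simp
      show ?thesis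
      proof (cases "hd (P e) = v")
        case True thus ?thesis using pe unfolding Q_def by auto
      next
        case False
        have "v \<in> {hd (P e), last (P e)}" using pe(3) ve by simp
        hence "last (P e) = v" using False by auto
        thus ?thesis using pe False ne unfolding Q_def
          by (auto simp: is_path_rev internal_rev hd_rev last_rev)
      qed
    qed
    define f where "f e = Q e ! 1" for e
    have fN: "f e \<in> N E v" if e: "e \<in> A" for e
    proof -
      have "{Q e ! 0, Q e ! Suc 0} \<in> E" using Qfacts[OF e] path_edge by fastforce
      moreover have "Q e ! 0 = v" using Qfacts[OF e] hd_conv_nth[of "Q e"] by fastforce
      ultimately show ?thesis unfolding f_def N_mem by simp
    qed
    have fcase: "(length (Q e) = 2 \<and> f e = last (Q e)) \<or> (f e \<in> internal (P e))" if e: "e \<in> A" for e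
    proof (cases "length (Q e) = 2")
      case True
      have "Q e \<noteq> []" using True by auto
      hence "last (Q e) = Q e ! 1" using True by (simp add: last_conv_nth)
      thus ?thesis unfolding f_def using True by simp
    next
      case False
      hence "f e \<in> internal (Q e)" unfolding f_def internal_nth using Qfacts[OF e]
        by (intro exI[of _ 1]) auto
      thus ?thesis using Qfacts[OF e] by simp
    qed
    have notVF: "x \<notin> VF" if "x \<in> internal (P e)" "e \<in> A" for x e
    proof -
      have "e \<in> EF" using that unfolding A_def by simp
      hence "internal (P e) \<inter> VF = {}" using bspec[OF Pp] by simp
      thus ?thesis using that by auto
    qed
    have lastVF: "last (Q e) \<in> VF" if "e \<in> A" for e
    proof -
      have "e \<in> EF" using that unfolding A_def by simp
      hence "e \<subseteq> VF" using edge_sub[OF gF] by simp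
      moreover have "last (Q e) \<in> e" using Qfacts[OF that] by (metis insertI1 insertI2)
      ultimately show ?thesis by blast
    qed
    have inj: "inj_on f A"
    proof
      fix e1 e2 assume e1: "e1 \<in> A" and e2: "e2 \<in> A" and eq: "f e1 = f e2"
      have e1F: "e1 \<in> EF" and e2F: "e2 \<in> EF" using e1 e2 unfolding A_def by auto
      show "e1 = e2"
      proof (cases "f e1 \<in> internal (P e1)")
        case True
        have n1: "f e1 \<notin> VF" using notVF[OF True e1] .
        have "f e2 \<in> internal (P e2)"
        proof (rule ccontr)
          assume "f e2 \<notin> internal (P e2)"
          hence "f e2 = last (Q e2)" using fcase[OF e2] by blast
          hence "f e2 \<in> VF" using lastVF[OF e2] by simp
          thus False using n1 eq by simp
        qed
        hence x: "f e1 \<in> internal (P e1) \<inter> internal (P e2)" using True eq by simp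
        show ?thesis
        proof (rule ccontr)
          assume "e1 \<noteq> e2"
          hence "internal (P e1) \<inter> internal (P e2) = {}" using Pd e1F e2F by blast
          thus False using x by simp
        qed
      next
        case False
        hence a: "f e1 = last (Q e1)" using fcase[OF e1] by blast
        hence "f e1 \<in> VF" using lastVF[OF e1] by simp
        hence "f e2 \<notin> internal (P e2)" using notVF[OF _ e2] eq by metis
        hence b: "f e2 = last (Q e2)" using fcase[OF e2] by blast
        have h1: "e1 = {v, last (Q e1)}" using Qfacts[OF e1] by blast
        have h2: "e2 = {v, last (Q e2)}" using Qfacts[OF e2] by blast
        have L: "last (Q e1) = last (Q e2)" using a b eq by simp
        show ?thesis by (rule trans[OF h1]) (simp add: L h2[symmetric])
      qed
    qed
    have "card A \<le> card (N E v)"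
      using card_inj_on_le[OF inj _ N_finite[OF g]] fN by blast
    moreover have "card A = degree EF v" unfolding A_def degree_def by simp
    moreover have "3 \<le> degree EF v" using dF v by blast
    ultimately show ?thesis using degree_N[OF g, of v] by simp
  qed
  have D2: "degree E w \<ge> 2" if e: "e \<in> EF" and w: "w \<in> internal (P e)" for e w
  proof -
    have pe: "is_path V E (P e)" using pathE e .
    have ds: "distinct (P e)" using pe unfolding is_path_def by simp
    obtain j where j: "0 < j" "j < length (P e) - 1" "w = P e!j" using w internal_nth by metis
    have ain: "P e!Suc j \<in> N E w" unfolding j(3)
      using path_edge[OF pe, of "j"] j by (intro edge_N') simp
    have cin: "P e!(j-1) \<in> N E w" unfolding j(3)
      using path_edge[OF pe, of "j-1"] j by (intro edge_N) simp
    have ac: "P e!Suc j \<noteq> P e!(j-1)" using ds j by (intro distinct_nth_neq) auto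
    have "card {P e!Suc j, P e!(j-1)} \<le> card (N E w)"
      using ain cin N_finite[OF g] by (intro card_mono) auto
    thus ?thesis using ac degree_N[OF g] by simp
  qed
  show ?thesis
  proof
    show "\<forall>v\<in>VF. 3 \<le> degree E v" using D1 by blast
    show "\<forall>u\<in>VH. 2 \<le> degree E u"
    proof
      fix u assume "u \<in> VH"
      hence "u \<in> VF \<or> (\<exists>e\<in>EF. u \<in> internal (P e))" using VH by blast
      thus "2 \<le> degree E u"
      proof
        assume "u \<in> VF" hence "3 \<le> degree E u" by (rule D1)
        thus ?thesis by simp
      next
        assume "\<exists>e\<in>EF. u \<in> internal (P e)"
        then obtain e where "e \<in> EF" "u \<in> internal (P e)" by blast
        thus ?thesis by (rule D2)
      qed
    qed
  qed
qed


lemma del_graph: "graph V E \<Longrightarrow> graph (V - S) {e\<in>E. e \<inter> S = {}}"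
proof -
  assume g: "graph V E"
  have "finite (V - S)" using g unfolding graph_def by simp
  moreover have "\<exists>u v. u \<noteq> v \<and> u \<in> V - S \<and> v \<in> V - S \<and> e = {u, v}" if "e \<in> {e\<in>E. e \<inter> S = {}}" for e
  proof -
    have eE: "e \<in> E" and eS: "e \<inter> S = {}" using that by auto
    obtain u v where "u \<noteq> v" "u \<in> V" "v \<in> V" "e = {u, v}" using g eE unfolding graph_def by auto
    thus ?thesis using eS by auto
  qed
  ultimately show ?thesis unfolding graph_def by simp
qed

lemma sub_del: "subgraph VH EH V E \<Longrightarrow> VH \<inter> S = {} \<Longrightarrow> subgraph VH EH (V - S) {e\<in>E. e \<inter> S = {}}"
proof -
  assume sub: "subgraph VH EH V E" and d: "VH \<inter> S = {}"
  have gH: "graph VH EH" and VV: "VH \<subseteq> V" and EE: "EH \<subseteq> E" using sub unfolding subgraph_def by auto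
  have "EH \<subseteq> {e\<in>E. e \<inter> S = {}}"
  proof
    fix e assume e: "e \<in> EH"
    have "e \<subseteq> VH" using edge_sub[OF gH e] .
    thus "e \<in> {e\<in>E. e \<inter> S = {}}" using e EE d by auto
  qed
  thus ?thesis unfolding subgraph_def using gH VV d by auto
qed

lemma red_graph:
  assumes g: "graph V E" and p: "p \<ge> 2" and r: "p_reduction p (V, E) G1"
  shows "graph (fst G1) (snd G1) \<and> card (fst G1) < card V \<and> fst G1 \<subseteq> V \<and> snd G1 \<subseteq> E"
proof -
  have fV: "finite V" using g unfolding graph_def by simp
  obtain S where S: "G1 = delete_vertices S (V, E)" "S \<subseteq> V" "S \<noteq> {}"
  proof -
    show ?thesis
    proof (cases "\<exists>v\<in>V. degree E v \<le> 1 \<and> G1 = delete_vertices {v} (V, E)")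
      case True
      then obtain v where "v \<in> V" "G1 = delete_vertices {v} (V, E)" by blast
      thus ?thesis using that[of "{v}"] by auto
    next
      case False
      then obtain xs where xs: "strict_ear V E xs" "p \<le> length xs - 1" "G1 = delete_vertices (internal xs) (V, E)"
        using r unfolding p_reduction_def by auto
      have "internal xs \<subseteq> set xs" unfolding internal_def
        by (metis in_set_butlastD list.set_sel(2) subsetI tl_Nil)
      moreover have "set xs \<subseteq> V" using xs(1) unfolding strict_ear_def is_path_def by simp
      moreover have "xs ! 1 \<in> internal xs" unfolding internal_nth using xs(2) p
        by (intro exI[of _ 1]) auto
      ultimately show ?thesis using that[of "internal xs"] xs(3) by blast
    qed
  qed
  have "graph (fst G1) (snd G1)" using S del_graph[OF g] unfolding delete_vertices_def by simp
  moreover have "card (fst G1) < card V" using S fV unfolding delete_vertices_def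
    by (simp add: psubset_card_mono Diff_subset) (metis Diff_subset Diff_eq_empty_iff Diff_Diff_Int inf.absorb_iff2 psubsetI psubset_card_mono subset_empty)
  moreover have "fst G1 \<subseteq> V \<and> snd G1 \<subseteq> E" using S unfolding delete_vertices_def by auto
  ultimately show ?thesis by simp
qed


lemma step_H:
  assumes g: "graph V E" and p2: "p \<ge> 2" and red: "p_reduction p (V, E) G1"
    and sub: "subgraph VH EH V E" and gF: "graph VF EF" and dF: "\<forall>v\<in>VF. degree EF v \<ge> 3"
    and sd: "is_le_subdivision (p - 2) VF EF VH EH"
  shows "subgraph VH EH (fst G1) (snd G1)"
proof -
  obtain P where Pp: "\<forall>e\<in>EF. is_path VH EH (P e) \<and> 2 \<le> length (P e) \<and> length (P e) \<le> (p - 2) + 2 \<and>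
                     {hd (P e), last (P e)} = e \<and> internal (P e) \<inter> VF = {}"
    and Pd: "\<forall>e\<in>EF. \<forall>e'\<in>EF. e \<noteq> e' \<longrightarrow> internal (P e) \<inter> internal (P e') = {}"
    and VH: "VH = VF \<union> (\<Union>e\<in>EF. internal (P e))"
    using sd unfolding is_le_subdivision_def by blast
  have HD: "(\<forall>v\<in>VF. degree E v \<ge> 3) \<and> (\<forall>u\<in>VH. degree E u \<ge> 2)"
    using Hdeg[OF g sub gF dF Pp Pd VH] .
  have VHV: "VH \<subseteq> V" and EHE: "EH \<subseteq> E" using sub unfolding subgraph_def by auto
  show ?thesis
  proof (cases "\<exists>v\<in>V. degree E v \<le> 1 \<and> G1 = delete_vertices {v} (V, E)")
    case True
    then obtain v where v: "v \<in> V" "degree E v \<le> 1" "G1 = delete_vertices {v} (V, E)" by blast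
    have "v \<notin> VH" using HD v(2) by fastforce
    hence "VH \<inter> {v} = {}" by simp
    hence "subgraph VH EH (V - {v}) {e\<in>E. e \<inter> {v} = {}}" using sub_del[OF sub] by blast
    thus ?thesis using v(3) unfolding delete_vertices_def by simp
  next
    case False
    then obtain xs where xs: "strict_ear V E xs" "p \<le> length xs - 1" "G1 = delete_vertices (internal xs) (V, E)"
      using red unfolding p_reduction_def by auto
    have "VH \<inter> internal xs = {}"
    proof (rule ccontr)
      assume "VH \<inter> internal xs \<noteq> {}"
      then obtain w where w: "w \<in> VH" "w \<in> internal xs" by blast
      have ear_deg: "\<forall>u\<in>internal xs. degree E u = 2" using xs(1) unfolding strict_ear_def by blast
      have dw: "degree E w = 2" using ear_deg w(2) by blast
      have "w \<notin> VF" using HD dw by fastforce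
      then obtain e where e: "e \<in> EF" "w \<in> internal (P e)" using w(1) VH by blast
      have pe: "is_path VH EH (P e)" "length (P e) \<le> p" "{hd (P e), last (P e)} = e"
        using bspec[OF Pp e(1)] p2 by auto
      have pe': "is_path V E (P e)" using path_mono[OF pe(1) VHV EHE] .
      have eVF: "e \<subseteq> VF" using edge_sub[OF gF e(1)] .
      have hVF: "hd (P e) \<in> VF" "last (P e) \<in> VF" using pe(3) eVF by auto
      have nh: "hd (P e) \<notin> internal xs" using hVF HD ear_deg by fastforce
      have nl: "last (P e) \<notin> internal xs" using hVF HD ear_deg by fastforce
      have px: "is_path V E xs" using xs(1) unfolding strict_ear_def by blast
      have deg: "\<forall>m. 0 < m \<and> m < length xs - 1 \<longrightarrow> degree E (xs!m) = 2"
        using ear_deg internal_nth by metis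
      have "length xs \<le> length (P e)" using follow_len[OF g px pe' deg nh nl w(2) e(2)] .
      thus False using pe(2) xs(2) p2 by linarith
    qed
    hence "subgraph VH EH (V - internal xs) {e\<in>E. e \<inter> internal xs = {}}" using sub_del[OF sub] by blast
    thus ?thesis using xs(3) unfolding delete_vertices_def by simp
  qed
qed

lemma nec_aux:
  assumes "(p_reduction p)\<^sup>*\<^sup>* G0 G1" "G1 = ({}, {})" "p \<ge> 2"
  shows "graph (fst G0) (snd G0) \<longrightarrow> \<not> hasH p (fst G0) (snd G0)"
  using assms(1)
proof (induction rule: converse_rtranclp_induct)
  case base
  show ?case
  proof (intro impI notI)
    assume "hasH p (fst G1) (snd G1)"
    then obtain VH EH VF EF where "subgraph VH EH (fst G1) (snd G1)" "VF \<noteq> {}" "is_le_subdivision (p - 2) VF EF VH EH"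
      unfolding hasH_def by meson
    thus False unfolding subgraph_def is_le_subdivision_def assms(2) by auto
  qed
next
  case (step y z)
  show ?case
  proof (intro impI notI)
    assume gy: "graph (fst y) (snd y)" and h: "hasH p (fst y) (snd y)"
    obtain V E where y: "y = (V, E)" by (cases y)
    have g: "graph V E" using gy y by simp
    have r: "p_reduction p (V, E) z" using step(1) y by simp
    obtain VH EH VF EF where H: "subgraph VH EH V E" "graph VF EF" "VF \<noteq> {}"
      "\<forall>v\<in>VF. degree EF v \<ge> 3" "is_le_subdivision (p - 2) VF EF VH EH"
      using h y unfolding hasH_def by auto
    have "subgraph VH EH (fst z) (snd z)" using step_H[OF g assms(3) r H(1,2,4,5)] .
    hence "hasH p (fst z) (snd z)" unfolding hasH_def using H by blast
    moreover have "graph (fst z) (snd z)" using red_graph[OF g assms(3) r] by simp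
    ultimately show False using step(3) by simp
  qed
qed


lemma internal_snoc:
  assumes "length xs \<ge> 2" shows "internal (xs @ [w]) = internal xs \<union> {last xs}"
proof -
  obtain a ys where xs: "xs = a # ys" "ys \<noteq> []" using assms by (cases xs; cases "tl xs") auto
  then obtain zs b where "ys = zs @ [b]" by (metis append_butlast_last_id)
  hence "xs = a # zs @ [b]" using xs by simp
  thus ?thesis unfolding internal_def by (auto simp: butlast_append)
qed

lemma path_len_card: "is_path V E xs \<Longrightarrow> finite V \<Longrightarrow> length xs \<le> card V"
  unfolding is_path_def by (metis card_mono distinct_card)

lemma ext:
  assumes g: "graph V E" and p2: "p \<ge> 2"
    and cyc: "\<forall>xs. is_cycle V E xs \<longrightarrow> 2*p-1 \<le> length xs"
    and deg2: "\<forall>v\<in>V. degree E v \<ge> 2"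
    and noear: "\<forall>xs. strict_ear V E xs \<longrightarrow> length xs - 1 < p"
    and ux: "{u, x} \<in> E"
  shows "\<exists>xs. is_path V E xs \<and> 2 \<le> length xs \<and> hd xs = u \<and> xs!1 = x \<and>
           (\<forall>w\<in>internal xs. degree E w = 2) \<and> degree E (last xs) \<ge> 3"
proof -
  define Pr where "Pr xs \<longleftrightarrow> is_path V E xs \<and> 2 \<le> length xs \<and> hd xs = u \<and> xs!1 = x \<and>
           (\<forall>w\<in>internal xs. degree E w = 2)" for xs
  have fV: "finite V" using g unfolding graph_def by simp
  have uxV: "u \<noteq> x" "u \<in> V" "x \<in> V" using graph_edge[OF g ux] by auto
  have P0: "Pr [u, x]" unfolding Pr_def is_path_def internal_def using uxV ux by auto
  have bound: "\<forall>m. (\<exists>xs. Pr xs \<and> length xs = m) \<longrightarrow> m \<le> card V"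
  proof (intro allI impI)
    fix m assume "\<exists>xs. Pr xs \<and> length xs = m"
    then obtain ys where ys: "Pr ys" "length ys = m" by blast
    have "is_path V E ys" using ys(1) unfolding Pr_def by simp
    thus "m \<le> card V" using path_len_card[OF _ fV] ys(2) by blast
  qed
  have ex0: "\<exists>xs. Pr xs \<and> length xs = 2" using P0 by force
  obtain n where n: "\<exists>xs. Pr xs \<and> length xs = n" "\<forall>m. (\<exists>xs. Pr xs \<and> length xs = m) \<longrightarrow> m \<le> n"
    using Nat.ex_has_greatest_nat[OF ex0 bound] by blast
  obtain xs where xs: "Pr xs" "length xs = n" using n(1) by blast
  have px: "is_path V E xs" and k2: "2 \<le> length xs" and hx: "hd xs = u" and x1: "xs!1 = x"
    and idg: "\<forall>w\<in>internal xs. degree E w = 2" using xs(1) unfolding Pr_def by auto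
  have ds: "distinct xs" and sV: "set xs \<subseteq> V" using px unfolding is_path_def by auto
  define k where "k = length xs"
  define v where "v = last xs"
  have ne: "xs \<noteq> []" using k2 by auto
  have vk: "v = xs!(k-1)" unfolding v_def k_def using ne by (simp add: last_conv_nth)
  have vV: "v \<in> V" using sV ne unfolding v_def by auto
  have dv: "degree E v \<ge> 2" using deg2 vV by blast
  show ?thesis
  proof (cases "degree E v \<ge> 3")
    case True thus ?thesis using xs(1) unfolding Pr_def v_def by blast
  next
    case False
    hence dv2: "degree E v = 2" using dv by simp
    have fin: "finite (N E v)" using N_finite[OF g] .
    have card: "card (N E v) = 2" using dv2 degree_N[OF g] by simp
    define prev where "prev = xs!(k-2)"
    have prevN: "prev \<in> N E v" unfolding prev_def vk
      using path_edge[OF px, of "k-2"] k2 unfolding k_def by (intro edge_N) (simp add: Suc_diff_Suc numeral_2_eq_2)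
    obtain w where w: "w \<in> N E v" "w \<noteq> prev"
    proof (rule ccontr)
      assume "\<not> thesis"
      hence "N E v \<subseteq> {prev}" using that by blast
      hence "card (N E v) \<le> 1" using card_mono[of "{prev}"] by fastforce
      thus False using card by simp
    qed
    have vw: "{v, w} \<in> E" using w(1) by (simp add: N_mem)
    have wV: "w \<in> V" and vnw: "v \<noteq> w" using graph_edge[OF g vw] by auto
    show ?thesis
    proof (cases "w \<in> set xs")
      case False
      define ys where "ys = xs @ [w]"
      have "Pr ys"
      proof -
        have "is_path V E ys" using px False wV vw ne unfolding ys_def is_path_succ
          by (auto simp: successively_append_iff adj_def v_def)
        moreover have "2 \<le> length ys" "hd ys = u" "ys!1 = x" using k2 hx x1 ne unfolding ys_def
          by (auto simp: nth_append)
        moreover have "\<forall>w\<in>internal ys. degree E w = 2"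
          using idg dv2 internal_snoc[OF k2] unfolding ys_def v_def by auto
        ultimately show ?thesis unfolding Pr_def by blast
      qed
      hence "length ys \<le> n" using n(2) by blast
      thus ?thesis using xs(2) unfolding ys_def by simp
    next
      case True
      then obtain m where m: "m < k" "xs!m = w" unfolding k_def by (metis in_set_conv_nth)
      have "m \<noteq> k - 1" using vnw m vk by auto
      moreover have "m \<noteq> k - 2" using w(2) m unfolding prev_def by auto
      moreover have "\<not> (0 < m \<and> m < k - 2)"
      proof
        assume mm: "0 < m \<and> m < k - 2"
        have wi: "w \<in> internal xs" unfolding internal_nth using mm m k2 unfolding k_def by auto
        have dw: "degree E w = 2" using idg wi by blast
        have cw: "card (N E w) = 2" using dw degree_N[OF g] by simp
        have a: "xs!(m-1) \<in> N E w" unfolding m(2)[symmetric]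
          using path_edge[OF px, of "m-1"] mm m(1) unfolding k_def by (intro edge_N) simp
        have b: "xs!Suc m \<in> N E w"
        proof -
          have "Suc m < length xs" using mm unfolding k_def by linarith
          thus ?thesis unfolding m(2)[symmetric] using path_edge[OF px, of "m"] by (intro edge_N') simp
        qed
        have c: "v \<in> N E w" using vw by (intro edge_N)
        have ab: "xs!(m-1) \<noteq> xs!Suc m" using ds mm unfolding k_def by (intro distinct_nth_neq) auto
        have ac: "xs!(m-1) \<noteq> v" unfolding vk using ds mm unfolding k_def by (intro distinct_nth_neq) auto
        have bc: "xs!Suc m = v" using two_nb[OF N_finite[OF g] cw a b c ab ac] .
        have "xs!Suc m \<noteq> v" unfolding vk using ds mm unfolding k_def by (intro distinct_nth_neq) auto
        thus False using bc by simp
      qed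
      ultimately have m0: "m = 0" using m(1) by linarith
      have k3: "3 \<le> k" using m0 `m \<noteq> k - 1` `m \<noteq> k - 2` k2 unfolding k_def by linarith
      have wu: "w = u" using m0 m hx ne by (simp add: hd_conv_nth)
      have "is_cycle V E xs" unfolding is_cycle_def using k3 px vw wu hx unfolding v_def k_def
        by simp
      hence kc: "2*p-1 \<le> k" using cyc unfolding k_def by blast
      have "hd xs \<noteq> last xs" using hx wu vnw unfolding v_def by simp
      hence "strict_ear V E xs" unfolding strict_ear_def using px k2 idg by blast
      hence "k - 1 < p" using noear unfolding k_def by blast
      thus ?thesis using kc p2 by linarith
    qed
  qed
qed


lemma decomp2: "length xs \<ge> 2 \<Longrightarrow> xs = hd xs # butlast (tl xs) @ [last xs]"
proof -
  assume "length xs \<ge> 2"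
  then obtain a ys where xs: "xs = a # ys" "ys \<noteq> []" by (cases xs; cases "tl xs") auto
  then obtain zs b where "ys = zs @ [b]" by (metis append_butlast_last_id)
  thus ?thesis using xs by simp
qed

lemma path_hd_last: "is_path V E s \<Longrightarrow> 2 \<le> length s \<Longrightarrow> hd s \<noteq> last s"
proof -
  assume p: "is_path V E s" and l: "2 \<le> length s"
  have ne: "s \<noteq> []" using l by auto
  have "s!0 \<noteq> s!(length s - 1)" using p l unfolding is_path_def by (intro distinct_nth_neq) auto
  thus ?thesis using ne by (simp add: hd_conv_nth last_conv_nth)
qed

context
  fixes V :: "'a set" and E :: "'a set set" and p :: nat
  assumes g: "graph V E" and p2: "p \<ge> 2"
    and cyc: "\<forall>xs. is_cycle V E xs \<longrightarrow> 2*p-1 \<le> length xs"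
    and deg2: "\<forall>v\<in>V. degree E v \<ge> 2"
    and noear: "\<forall>xs. strict_ear V E xs \<longrightarrow> length xs - 1 < p"
begin

lemma seg_len: "seg V E s \<Longrightarrow> length s \<le> p"
proof -
  assume s: "seg V E s"
  have "strict_ear V E s" unfolding strict_ear_def using s path_hd_last unfolding seg_def by blast
  hence "length s - 1 < p" using noear by blast
  thus ?thesis by linarith
qed

lemma two_segs:
  assumes s1: "seg V E s1" and s2: "seg V E s2" and h: "hd s1 = hd s2" and l: "last s1 = last s2"
    and d: "s1!1 \<noteq> s2!1"
  shows False
proof -
  have ps1: "is_path V E s1" and ps2: "is_path V E s2" and l1: "2 \<le> length s1" and l2: "2 \<le> length s2"
    using s1 s2 unfolding seg_def by auto
  have ds1: "distinct s1" and ds2: "distinct s2" and V1: "set s1 \<subseteq> V" and V2: "set s2 \<subseteq> V"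
    using ps1 ps2 unfolding is_path_def by auto
  define v where "v = hd s1"
  define t where "t = last s1"
  have vt: "v \<noteq> t" using path_hd_last[OF ps1 l1] unfolding v_def t_def .
  have disj: "internal s1 \<inter> internal s2 = {}"
  proof (rule ccontr)
    assume "internal s1 \<inter> internal s2 \<noteq> {}"
    then obtain w where "w \<in> internal s1" "w \<in> internal s2" by blast
    hence "s1 = s2 \<or> s1 = rev s2" using seg_shared[OF g s1 s2] by blast
    thus False
    proof
      assume "s1 = s2" thus False using d by simp
    next
      assume "s1 = rev s2"
      hence "hd s1 = last s2" using l2 by (simp add: hd_rev)
      thus False using vt h l unfolding v_def t_def by simp
    qed
  qed
  have lp1: "length s1 \<le> p" and lp2: "length s2 \<le> p" using seg_len s1 s2 by auto
  define mid where "mid = butlast (tl s2)"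
  have s2d: "s2 = v # mid @ [t]" using decomp2[OF l2] h l unfolding mid_def v_def t_def by simp
  have s1d: "s1 = v # butlast (tl s1) @ [t]" using decomp2[OF l1] unfolding v_def t_def by simp
  have midI: "set mid = internal s2" unfolding mid_def internal_def by simp
  have sc2: "successively (adj E) s2" using ps2 unfolding is_path_succ by simp
  have sc1: "successively (adj E) s1" using ps1 unfolding is_path_succ by simp
  have vV: "3 \<le> degree E v" "3 \<le> degree E t" using s1 unfolding seg_def v_def t_def by auto
  have notint: "v \<notin> internal s2" "t \<notin> internal s2"
    using vV s2 unfolding seg_def by fastforce+
  show False
  proof (cases "mid = []")
    case True
    hence "length s2 = 2" using s2d by simp
    hence "s2!1 = t" using s2d True by simp
    moreover have "length s1 \<noteq> 2"
    proof
      assume "length s1 = 2"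
      hence "s1!1 = t" using s1d by (cases "butlast (tl s1)") auto
      thus False using d `s2!1 = t` by simp
    qed
    ultimately have l13: "3 \<le> length s1" using l1 by simp
    have "adj E v t" using sc2 True s2d by (metis successively.simps(3) append_Nil)
    hence "{last s1, hd s1} \<in> E" unfolding adj_def v_def t_def by (simp add: insert_commute)
    hence "is_cycle V E s1" unfolding is_cycle_def using l13 ps1 by simp
    hence "2*p - 1 \<le> length s1" using cyc by blast
    thus False using lp1 p2 by linarith
  next
    case False
    define c where "c = s1 @ rev mid"
    have "s1 \<noteq> []" using l1 by auto
    have scm: "successively (adj E) mid" and amt: "adj E (last mid) t" and avm: "adj E v (hd mid)"
      using sc2 False unfolding s2d
      by (auto simp: successively_append_iff successively_Cons)
    have "successively (adj E) c" unfolding c_def using sc1 scm amt False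
      by (auto simp: successively_append_iff adj_sym t_def hd_rev)
    moreover have "distinct c" unfolding c_def using ds1 ds2 disj notint midI
    proof -
      have "distinct mid" using ds2 unfolding s2d by simp
      moreover have "set s1 \<inter> set mid = {}"
      proof -
        have "set s1 = {v, t} \<union> internal s1" using set_decomp[OF l1] unfolding v_def t_def by simp
        thus ?thesis using disj notint midI by auto
      qed
      ultimately show "distinct (s1 @ rev mid)" using ds1 by simp
    qed
    moreover have "set c \<subseteq> V" unfolding c_def using V1 V2 unfolding s2d by auto
    moreover have "{last c, hd c} \<in> E" unfolding c_def using avm False l1 ds1 \<open>s1 \<noteq> []\<close>
      by (simp add: last_rev adj_def v_def insert_commute hd_append)
    moreover have lc: "length c = length s1 + length s2 - 2" unfolding c_def s2d by simp
    moreover have "3 \<le> length c"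
    proof -
      have "length mid \<ge> 1" using False by (cases mid) auto
      thus ?thesis using lc l1 s2d by simp
    qed
    ultimately have "is_cycle V E c" unfolding is_cycle_def is_path_succ by auto
    hence "2*p - 1 \<le> length c" using cyc by blast
    thus False using lc lp1 lp2 p2 by linarith
  qed
qed

end


lemma path_edges_sub: "is_path V E s \<Longrightarrow> path_edges s \<subseteq> E"
  unfolding path_edges_def is_path_def by auto

lemma path_edges_set: "e \<in> path_edges s \<Longrightarrow> \<exists>i. Suc i < length s \<and> e = {s!i, s!Suc i}"
  unfolding path_edges_def by auto

lemma internal_set: "internal s \<subseteq> set s"
  unfolding internal_def by (metis in_set_butlastD list.set_sel(2) subsetI tl_Nil)

context
  fixes V :: "'a set" and E :: "'a set set" and p :: nat
  assumes g: "graph V E" and p2: "p \<ge> 2"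
    and cyc: "\<forall>xs. is_cycle V E xs \<longrightarrow> 2*p-1 \<le> length xs"
    and deg2: "\<forall>v\<in>V. degree E v \<ge> 2"
    and noear: "\<forall>xs. strict_ear V E xs \<longrightarrow> length xs - 1 < p"
    and Vne: "V \<noteq> {}"
begin

lemma stuck_H: "hasH p V E"
proof -
  define VF where "VF = {v\<in>V. 3 \<le> degree E v}"
  define EF where "EF = {{hd s, last s} | s. seg V E s}"
  define P where "P e = (SOME s. seg V E s \<and> {hd s, last s} = e)" for e
  define VH where "VH = VF \<union> (\<Union>e\<in>EF. internal (P e))"
  define EH where "EH = (\<Union>e\<in>EF. path_edges (P e))"
  have fV: "finite V" using g unfolding graph_def by simp
  have PS: "seg V E (P e) \<and> {hd (P e), last (P e)} = e" if e: "e \<in> EF" for e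
  proof -
    obtain s where "seg V E s" "e = {hd s, last s}" using e unfolding EF_def by blast
    hence "\<exists>s. seg V E s \<and> {hd s, last s} = e" by blast
    thus ?thesis unfolding P_def by (rule someI_ex)
  qed
  have segl: "length s \<le> p" if "seg V E s" for s using seg_len[OF g p2 cyc deg2 noear that] .
  have segVF: "hd s \<in> VF \<and> last s \<in> VF" if s: "seg V E s" for s
  proof -
    have "s \<noteq> []" "set s \<subseteq> V" using s unfolding seg_def is_path_def by auto
    thus ?thesis using s unfolding seg_def VF_def by auto
  qed
  have segint: "internal s \<subseteq> V \<and> internal s \<inter> VF = {}" if s: "seg V E s" for s
  proof -
    have "set s \<subseteq> V" using s unfolding seg_def is_path_def by auto
    thus ?thesis using s internal_set[of s] unfolding seg_def VF_def by fastforce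
  qed
  have PVH: "set (P e) \<subseteq> VH" if e: "e \<in> EF" for e
  proof -
    have s: "seg V E (P e)" using PS[OF e] by simp
    have "set (P e) = {hd (P e), last (P e)} \<union> internal (P e)" using set_decomp s unfolding seg_def by blast
    moreover have "hd (P e) \<in> VH" "last (P e) \<in> VH" using segVF[OF s] unfolding VH_def by auto
    moreover have "internal (P e) \<subseteq> VH" using e unfolding VH_def by blast
    ultimately show ?thesis by (metis Un_subset_iff insert_subset empty_subsetI)
  qed
  have VFV: "VF \<subseteq> V" unfolding VF_def by auto
  have VHV: "VH \<subseteq> V"
  proof -
    have "internal (P e) \<subseteq> V" if "e \<in> EF" for e using segint PS[OF that] by blast
    thus ?thesis using VFV unfolding VH_def by blast
  qed
  have EHE: "EH \<subseteq> E"
  proof -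
    have "path_edges (P e) \<subseteq> E" if "e \<in> EF" for e
      using path_edges_sub PS[OF that] unfolding seg_def by blast
    thus ?thesis unfolding EH_def by blast
  qed
  have gF: "graph VF EF"
  proof -
    have "finite VF" using VFV fV finite_subset by blast
    moreover have "\<exists>u v. u \<noteq> v \<and> u \<in> VF \<and> v \<in> VF \<and> e = {u, v}" if e: "e \<in> EF" for e
    proof -
      obtain s where s: "seg V E s" "e = {hd s, last s}" using e unfolding EF_def by blast
      have "hd s \<noteq> last s" using path_hd_last s(1) unfolding seg_def by blast
      thus ?thesis using segVF[OF s(1)] s(2) by blast
    qed
    ultimately show ?thesis unfolding graph_def by simp
  qed
  have gH: "graph VH EH"
  proof -
    have "finite VH" using VHV fV finite_subset by blast
    moreover have "\<exists>u v. u \<noteq> v \<and> u \<in> VH \<and> v \<in> VH \<and> e = {u, v}" if e: "e \<in> EH" for e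
    proof -
      obtain e0 where e0: "e0 \<in> EF" "e \<in> path_edges (P e0)" using e unfolding EH_def by blast
      obtain i where i: "Suc i < length (P e0)" "e = {P e0 ! i, P e0 ! Suc i}" using path_edges_set[OF e0(2)] by blast
      have "distinct (P e0)" using PS[OF e0(1)] unfolding seg_def is_path_def by simp
      hence "P e0 ! i \<noteq> P e0 ! Suc i" using i(1) by (intro distinct_nth_neq) auto
      moreover have "P e0 ! i \<in> VH" "P e0 ! Suc i \<in> VH" using PVH[OF e0(1)] i(1) by (auto intro: nth_mem)
      ultimately show ?thesis using i(2) by blast
    qed
    ultimately show ?thesis unfolding graph_def by simp
  qed
  have sub: "subgraph VH EH V E" unfolding subgraph_def using gH VHV EHE by simp
  have VFne: "VF \<noteq> {}"
  proof -
    obtain u where u: "u \<in> V" using Vne by blast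
    have "card (N E u) \<ge> 2" using deg2 u degree_N[OF g] by metis
    hence "N E u \<noteq> {}" by auto
    then obtain x where "x \<in> N E u" by blast
    hence ux: "{u, x} \<in> E" by (simp add: N_mem)
    obtain xs where xs: "is_path V E xs" "2 \<le> length xs" "3 \<le> degree E (last xs)"
      using ext[OF g p2 cyc deg2 noear ux] by blast
    have "last xs \<in> V" using xs(1,2) unfolding is_path_def by (metis last_in_set subsetD)
    thus ?thesis using xs(3) unfolding VF_def by blast
  qed
  have dF: "\<forall>v\<in>VF. degree EF v \<ge> 3"
  proof
    fix v assume v: "v \<in> VF"
    define S where "S x = (SOME s. is_path V E s \<and> 2 \<le> length s \<and> hd s = v \<and> s!1 = x \<and>
           (\<forall>w\<in>internal s. degree E w = 2) \<and> degree E (last s) \<ge> 3)" for x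
    have SS: "seg V E (S x) \<and> hd (S x) = v \<and> S x ! 1 = x" if x: "x \<in> N E v" for x
    proof -
      have "{v, x} \<in> E" using x by (simp add: N_mem)
      hence "\<exists>s. is_path V E s \<and> 2 \<le> length s \<and> hd s = v \<and> s!1 = x \<and>
           (\<forall>w\<in>internal s. degree E w = 2) \<and> degree E (last s) \<ge> 3"
        using ext[OF g p2 cyc deg2 noear] by blast
      hence "is_path V E (S x) \<and> 2 \<le> length (S x) \<and> hd (S x) = v \<and> S x!1 = x \<and>
           (\<forall>w\<in>internal (S x). degree E w = 2) \<and> degree E (last (S x)) \<ge> 3"
        unfolding S_def by (rule someI_ex)
      moreover have "3 \<le> degree E v" using v unfolding VF_def by simp
      ultimately show ?thesis unfolding seg_def by auto
    qed
    define f where "f x = {v, last (S x)}" for x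
    have fA: "f x \<in> {e\<in>EF. v \<in> e}" if x: "x \<in> N E v" for x
    proof -
      have "f x = {hd (S x), last (S x)}" using SS[OF x] unfolding f_def by simp
      hence "f x \<in> EF" unfolding EF_def using SS[OF x] by blast
      thus ?thesis unfolding f_def by simp
    qed
    have inj: "inj_on f (N E v)"
    proof
      fix x y assume x: "x \<in> N E v" and y: "y \<in> N E v" and eq: "f x = f y"
      have ne: "v \<noteq> last (S x)" "v \<noteq> last (S y)"
        using SS x y path_hd_last unfolding seg_def by metis+
      have L: "last (S x) = last (S y)" using eq ne unfolding f_def by (auto simp: doubleton_eq_iff)
      show "x = y"
      proof (rule ccontr)
        assume "x \<noteq> y"
        hence "S x ! 1 \<noteq> S y ! 1" using SS x y by simp
        moreover have "hd (S x) = hd (S y)" using SS x y by simp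
        ultimately show False using two_segs[OF g p2 cyc deg2 noear] SS x y L by blast
      qed
    qed
    have finEF: "finite EF" using graph_finite_E[OF gF] .
    have "card (N E v) \<le> card {e\<in>EF. v \<in> e}"
      using card_inj_on_le[OF inj _] fA finEF by (metis (no_types, lifting) finite_subset image_subsetI mem_Collect_eq subsetI)
    moreover have "degree E v = card (N E v)" using degree_N[OF g] .
    moreover have "3 \<le> degree E v" using v unfolding VF_def by simp
    ultimately show "degree EF v \<ge> 3" unfolding degree_def by simp
  qed
  have Pp: "\<forall>e\<in>EF. is_path VH EH (P e) \<and> 2 \<le> length (P e) \<and> length (P e) \<le> (p - 2) + 2 \<and>
                     {hd (P e), last (P e)} = e \<and> internal (P e) \<inter> VF = {}"
  proof
    fix e assume e: "e \<in> EF"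
    have s: "seg V E (P e)" and he: "{hd (P e), last (P e)} = e" using PS[OF e] by auto
    have ip: "is_path VH EH (P e)"
    proof -
      have "\<forall>i. Suc i < length (P e) \<longrightarrow> {P e ! i, P e ! Suc i} \<in> EH"
        using e unfolding EH_def path_edges_def by blast
      thus ?thesis using s PVH[OF e] unfolding seg_def is_path_def by simp
    qed
    show "is_path VH EH (P e) \<and> 2 \<le> length (P e) \<and> length (P e) \<le> (p - 2) + 2 \<and>
                     {hd (P e), last (P e)} = e \<and> internal (P e) \<inter> VF = {}"
      using ip s segl[OF s] he segint[OF s] p2 unfolding seg_def by simp
  qed
  have Pd: "\<forall>e\<in>EF. \<forall>e'\<in>EF. e \<noteq> e' \<longrightarrow> internal (P e) \<inter> internal (P e') = {}"
  proof (intro ballI impI)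
    fix e e' assume e: "e \<in> EF" and e': "e' \<in> EF" and ne: "e \<noteq> e'"
    show "internal (P e) \<inter> internal (P e') = {}"
    proof (rule ccontr)
      assume "internal (P e) \<inter> internal (P e') \<noteq> {}"
      then obtain w where "w \<in> internal (P e)" "w \<in> internal (P e')" by blast
      hence "P e = P e' \<or> P e = rev (P e')" using seg_shared[OF g] PS e e' by blast
      moreover have "P e' \<noteq> []" using PS[OF e'] unfolding seg_def by auto
      ultimately have "{hd (P e), last (P e)} = {hd (P e'), last (P e')}"
        by (auto simp: hd_rev last_rev)
      thus False using PS e e' ne by metis
    qed
  qed
  have "is_le_subdivision (p - 2) VF EF VH EH"
    unfolding is_le_subdivision_def using gF gH Pp Pd VH_def EH_def by blast
  thus ?thesis unfolding hasH_def using sub gF VFne dF by blast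
qed

end


lemma cycle_mono: "is_cycle V' E' xs \<Longrightarrow> V' \<subseteq> V \<Longrightarrow> E' \<subseteq> E \<Longrightarrow> is_cycle V E xs"
  unfolding is_cycle_def using path_mono by blast

lemma hasH_mono: "hasH p V' E' \<Longrightarrow> V' \<subseteq> V \<Longrightarrow> E' \<subseteq> E \<Longrightarrow> hasH p V E"
proof -
  assume h: "hasH p V' E'" and a: "V' \<subseteq> V" "E' \<subseteq> E"
  then obtain VH EH VF EF where H: "subgraph VH EH V' E'" "graph VF EF" "VF \<noteq> {}"
      "\<forall>v\<in>VF. degree EF v \<ge> 3" "is_le_subdivision (p - 2) VF EF VH EH"
    unfolding hasH_def by meson
  have "subgraph VH EH V E" using H(1) a unfolding subgraph_def by blast
  thus ?thesis unfolding hasH_def using H by blast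
qed

lemma suff:
  assumes "graph V E" "p \<ge> 2" "\<forall>xs. is_cycle V E xs \<longrightarrow> 2*p-1 \<le> length xs" "\<not> hasH p V E"
  shows "p_path_degenerate p V E"
  using assms
proof (induction "card V" arbitrary: V E rule: less_induct)
  case less
  note g = less.prems(1) and p2 = less.prems(2) and cyc = less.prems(3) and nH = less.prems(4)
  show ?case
  proof (cases "\<exists>G1. p_reduction p (V, E) G1")
    case True
    then obtain G1 where r: "p_reduction p (V, E) G1" by blast
    have G1: "graph (fst G1) (snd G1)" "card (fst G1) < card V" "fst G1 \<subseteq> V" "snd G1 \<subseteq> E"
      using red_graph[OF g p2 r] by auto
    have cyc1: "\<forall>xs. is_cycle (fst G1) (snd G1) xs \<longrightarrow> 2*p-1 \<le> length xs"
      using cyc cycle_mono G1(3,4) by blast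
    have nH1: "\<not> hasH p (fst G1) (snd G1)" using nH hasH_mono G1(3,4) by blast
    have "p_path_degenerate p (fst G1) (snd G1)" using less.hyps[OF G1(2) G1(1) p2 cyc1 nH1] .
    hence "(p_reduction p)\<^sup>*\<^sup>* G1 ({}, {})" unfolding p_path_degenerate_def by simp
    thus ?thesis unfolding p_path_degenerate_def using r
      by (rule converse_rtranclp_into_rtranclp[rotated])
  next
    case False
    show ?thesis
    proof (cases "V = {}")
      case True
      have "E = {}"
      proof (rule ccontr)
        assume "E \<noteq> {}"
        then obtain e where "e \<in> E" by blast
        then obtain u v where "u \<in> V" using g unfolding graph_def by auto
        thus False using True by simp
      qed
      thus ?thesis unfolding p_path_degenerate_def using True by simp
    next
      case Vne: False
      have deg2: "\<forall>v\<in>V. degree E v \<ge> 2"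
      proof
        fix v assume v: "v \<in> V"
        show "degree E v \<ge> 2"
        proof (rule ccontr)
          assume "\<not> degree E v \<ge> 2"
          hence "degree E v \<le> 1" by simp
          hence "p_reduction p (V, E) (delete_vertices {v} (V, E))" unfolding p_reduction_def using v
            by (intro disjI1) auto
          thus False using False by blast
        qed
      qed
      have noear: "\<forall>xs. strict_ear V E xs \<longrightarrow> length xs - 1 < p"
      proof (intro allI impI)
        fix xs assume xs: "strict_ear V E xs"
        show "length xs - 1 < p"
        proof (rule ccontr)
          assume "\<not> length xs - 1 < p"
          hence "p_reduction p (V, E) (delete_vertices (internal xs) (V, E))" unfolding p_reduction_def
            using xs by auto
          thus False using False by blast
        qed
      qed
      have "hasH p V E" using stuck_H[OF g p2 cyc deg2 noear Vne] .
      thus ?thesis using nH by simp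
    qed
  qed
qed

theorem mainTheorem5:
  fixes V :: "'a set" and E :: "'a set set" and p :: nat
  assumes "graph V E" and "p \<ge> 2" and "girth V E \<ge> enat (2 * p - 1)"
  shows "p_path_degenerate p V E \<longleftrightarrow>
    \<not> (\<exists>VH EH VF EF. subgraph VH EH V E \<and> graph VF EF \<and> VF \<noteq> {} \<and>
          (\<forall>v\<in>VF. degree EF v \<ge> 3) \<and> is_le_subdivision (p - 2) VF EF VH EH)"
proof -
  have cyc: "\<forall>xs. is_cycle V E xs \<longrightarrow> 2*p-1 \<le> length xs" using girth_cycle assms(3) by blast
  have "p_path_degenerate p V E \<longleftrightarrow> \<not> hasH p V E"
  proof
    assume "p_path_degenerate p V E"
    hence "(p_reduction p)\<^sup>*\<^sup>* (V, E) ({}, {})" unfolding p_path_degenerate_def .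
    thus "\<not> hasH p V E" using nec_aux[of p "(V, E)" "({}, {})"] assms(1,2) by simp
  next
    assume "\<not> hasH p V E"
    thus "p_path_degenerate p V E" using suff assms(1,2) cyc by blast
  qed
  thus ?thesis unfolding hasH_def .
qed

end
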